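(* Let $(\omega,\rho)$ be a linear $\mathrm{SU}(3)$-structure on $\mathbb R^6$ and let $\alpha\in\Lambda^2(\mathbb R^6)^*$. Then \begin{enumerate} \item $\|\alpha\|^2+\big\|\tfrac12\omega^2\wedge\alpha\big\|^2=\|\alpha\wedge\omega\|^2\le 4\|\alpha\|^2$; \item $\|\alpha^3\|^2\le 6\|\alpha\|^6$, \end{enumerate} where $\|\cdot\|$ is the norm on forms induced by the scalar product defined by the $\mathrm{SU}(3)$-structure.
   Context: A linear $\mathrm{SU}(3)$-structure on $\mathbb R^6$ is a pair $(\omega,\rho)$, $\omega\in\Lambda^2(\mathbb R^6)^*$, $\rho\in\Lambda^3(\mathbb R^6)^*$, such that for some basis $\{e^1,\dots,e^6\}$ of $(\mathbb R^6)^*$ one has $\omega=e^{12}+e^{34}+e^{56}$ and $\rho=\mathrm{Re}\big((e^1+ie^2)\wedge(e^3+ie^4)\wedge(e^5+ie^6)\big)$; the induced scalar product is the one making this basis orthonormal, extended to forms so that the $e^{i_1\cdots i_k}$ ($i_1<\dots<i_k$) are orthonormal. *)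

theory Defs
  imports Complex_Main
begin

text \<open>Exterior forms on R^6, in coordinates with respect to the standard dual basis
  dx_0,...,dx_5 of (R^6)^*.  A form is a coefficient function on index sets:
  beta = sum over I subset {0..5} of (beta I) dx^I, where dx^I = dx_{i1} wedge ... wedge dx_{ik}
  for I = {i1 < ... < ik}.\<close>

type_synonym 'a form = "nat set \<Rightarrow> 'a"

definition inv_count :: "nat set \<Rightarrow> nat set \<Rightarrow> nat" where
  "inv_count A B = card {(i, j). i \<in> A \<and> j \<in> B \<and> j < i}"

text \<open>Wedge product: dx^A wedge dx^B = (-1)^(inversions) dx^(A union B) for disjoint A, B.\<close>
definition wedge :: "'a::comm_ring_1 form \<Rightarrow> 'a form \<Rightarrow> 'a form" where
  "wedge a b = (\<lambda>S. if S \<subseteq> {..<6}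
      then (\<Sum>A\<in>Pow S. (-1) ^ inv_count A (S - A) * a A * b (S - A)) else 0)"

definition form_add :: "'a::comm_ring_1 form \<Rightarrow> 'a form \<Rightarrow> 'a form" where
  "form_add a b = (\<lambda>S. a S + b S)"

definition form_smult :: "'a::comm_ring_1 \<Rightarrow> 'a form \<Rightarrow> 'a form" where
  "form_smult c a = (\<lambda>S. c * a S)"

definition unit_form :: "'a::comm_ring_1 form" where
  "unit_form = (\<lambda>S. if S = {} then 1 else 0)"

definition is_k_form :: "nat \<Rightarrow> 'a::comm_ring_1 form \<Rightarrow> bool" where
  "is_k_form k b \<longleftrightarrow> (\<forall>S. b S \<noteq> 0 \<longrightarrow> S \<subseteq> {..<6} \<and> card S = k)"

definition is_dual_basis :: "(nat \<Rightarrow> real form) \<Rightarrow> bool" where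
  "is_dual_basis e \<longleftrightarrow> (\<forall>i<6. is_k_form 1 (e i)) \<and>
     (\<forall>a::nat \<Rightarrow> real. (\<forall>S. (\<Sum>i<6. a i * e i S) = 0) \<longrightarrow> (\<forall>i<6. a i = 0))"

definition elem_form :: "(nat \<Rightarrow> real form) \<Rightarrow> nat set \<Rightarrow> real form" where
  "elem_form e I = foldr (\<lambda>i acc. wedge (e i) acc) (sorted_list_of_set I) unit_form"

definition expand :: "(nat \<Rightarrow> real form) \<Rightarrow> real form \<Rightarrow> real form" where
  "expand e c = (\<lambda>S. \<Sum>I\<in>Pow {..<6}. c I * elem_form e I S)"

definition coords :: "(nat \<Rightarrow> real form) \<Rightarrow> real form \<Rightarrow> real form" where
  "coords e b = (THE c. (\<forall>S. \<not> S \<subseteq> {..<6} \<longrightarrow> c S = 0) \<and> expand e c = b)"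

text \<open>Norm induced by the scalar product making the e^I orthonormal.\<close>
definition form_norm :: "(nat \<Rightarrow> real form) \<Rightarrow> real form \<Rightarrow> real" where
  "form_norm e b = sqrt (\<Sum>I\<in>Pow {..<6}. (coords e b I) ^ 2)"

definition to_complex :: "real form \<Rightarrow> complex form" where
  "to_complex a = (\<lambda>S. complex_of_real (a S))"

text \<open>e is an adapted basis for (omega, rho): omega = e^12+e^34+e^56 and
  rho = Re((e^1+ie^2) wedge (e^3+ie^4) wedge (e^5+ie^6)) (indices shifted to 0..5).\<close>
definition su3_adapted :: "(nat \<Rightarrow> real form) \<Rightarrow> real form \<Rightarrow> real form \<Rightarrow> bool" where
  "su3_adapted e \<omega> \<rho> \<longleftrightarrow> is_dual_basis e \<and>
     \<omega> = form_add (form_add (wedge (e 0) (e 1)) (wedge (e 2) (e 3))) (wedge (e 4) (e 5)) \<and>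
     (let \<theta> = (\<lambda>j k. form_add (to_complex (e j)) (form_smult \<i> (to_complex (e k))))
      in \<rho> = (\<lambda>S. Re (wedge (wedge (\<theta> 0 1) (\<theta> 2 3)) (\<theta> 4 5) S)))"

definition linear_su3_structure :: "real form \<Rightarrow> real form \<Rightarrow> bool" where
  "linear_su3_structure \<omega> \<rho> \<longleftrightarrow> (\<exists>e. su3_adapted e \<omega> \<rho>)"

end

theory Submission
  imports Defs "Jordan_Normal_Form.Determinant"
begin

lemma inv_count_finite: "finite A \<Longrightarrow> finite B \<Longrightarrow> finite {(i, j). i \<in> A \<and> j \<in> B \<and> j < i}"
  by (rule finite_subset[of _ "A \<times> B"]) auto

lemma inv_union_left:
  assumes "finite A" "finite A'" "finite B" "A \<inter> A' = {}"
  shows "inv_count (A \<union> A') B = inv_count A B + inv_count A' B"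
proof -
  have "{(i, j). i \<in> A \<union> A' \<and> j \<in> B \<and> j < i} = {(i, j). i \<in> A \<and> j \<in> B \<and> j < i} \<union> {(i, j). i \<in> A' \<and> j \<in> B \<and> j < i}" by auto
  moreover have "card ({(i, j). i \<in> A \<and> j \<in> B \<and> j < i} \<union> {(i, j). i \<in> A' \<and> j \<in> B \<and> j < i}) =
     card {(i, j). i \<in> A \<and> j \<in> B \<and> j < i} + card {(i, j). i \<in> A' \<and> j \<in> B \<and> j < i}"
    by (rule card_Un_disjoint) (use assms inv_count_finite in auto)
  ultimately show ?thesis unfolding inv_count_def by simp
qed

lemma inv_union_right:
  assumes "finite A" "finite B" "finite B'" "B \<inter> B' = {}"
  shows "inv_count A (B \<union> B') = inv_count A B + inv_count A B'"
proof -
  have "{(i, j). i \<in> A \<and> j \<in> B \<union> B' \<and> j < i} = {(i, j). i \<in> A \<and> j \<in> B \<and> j < i} \<union> {(i, j). i \<in> A \<and> j \<in> B' \<and> j < i}" by auto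
  moreover have "card ({(i, j). i \<in> A \<and> j \<in> B \<and> j < i} \<union> {(i, j). i \<in> A \<and> j \<in> B' \<and> j < i}) =
     card {(i, j). i \<in> A \<and> j \<in> B \<and> j < i} + card {(i, j). i \<in> A \<and> j \<in> B' \<and> j < i}"
    by (rule card_Un_disjoint) (use assms inv_count_finite in auto)
  ultimately show ?thesis unfolding inv_count_def by simp
qed

lemma inv_swap:
  assumes "finite A" "finite B" "A \<inter> B = {}"
  shows "inv_count A B + inv_count B A = card A * card B"
proof -
  have e: "inv_count B A = card {(i, j). i \<in> A \<and> j \<in> B \<and> i < j}"
    unfolding inv_count_def
    by (rule bij_betw_same_card[of "\<lambda>(x,y). (y,x)"]) (auto simp: bij_betw_def inj_on_def image_def)
  have "A \<times> B = {(i, j). i \<in> A \<and> j \<in> B \<and> j < i} \<union> {(i, j). i \<in> A \<and> j \<in> B \<and> i < j}"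
    using assms by auto
  moreover have "card ({(i, j). i \<in> A \<and> j \<in> B \<and> j < i} \<union> {(i, j). i \<in> A \<and> j \<in> B \<and> i < j})
     = inv_count A B + card {(i, j). i \<in> A \<and> j \<in> B \<and> i < j}"
    unfolding inv_count_def
    by (rule card_Un_disjoint) (use assms inv_count_finite in \<open>auto intro: finite_subset[of _ "A \<times> B"]\<close>)
  ultimately have "card A * card B = inv_count A B + card {(i, j). i \<in> A \<and> j \<in> B \<and> i < j}"
    by (simp add: card_cartesian_product[symmetric])
  then show ?thesis using e by simp
qed

lemma sum_pairs:
  assumes fS: "finite S"
  shows "(\<Sum>p\<in>(SIGMA A:Pow S. Pow A). g p) = (\<Sum>q\<in>(SIGMA B:Pow S. Pow (S - B)). g (case q of (B, C) \<Rightarrow> (B \<union> C, B)))"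
proof (rule sum.reindex_bij_witness[where i="\<lambda>(B,C). (B \<union> C, B)" and j="\<lambda>(A,B). (B, A - B)"])
qed (auto simp: Un_absorb1 Un_absorb2)

lemma wedge_assoc: "wedge (wedge a b) c = wedge a (wedge b (c :: real form))"
proof
  fix S
  show "wedge (wedge a b) c S = wedge a (wedge b c) S"
  proof (cases "S \<subseteq> {..<6}")
    case False then show ?thesis by (simp add: wedge_def)
  next
    case True
    have fS: "finite S" using True finite_subset by blast
    define g where "g = (\<lambda>(A,B). (-1::real) ^ (inv_count B (A - B) + inv_count A (S - A)) * a B * b (A - B) * c (S - A))"
    define h where "h = (\<lambda>(B,C). (-1::real) ^ (inv_count B (S - B) + inv_count C (S - B - C)) * a B * b C * c (S - B - C))"
    have "wedge (wedge a b) c S = (\<Sum>A\<in>Pow S. \<Sum>B\<in>Pow A. g (A,B))"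
      unfolding wedge_def g_def using True
      by (auto simp: sum_distrib_left sum_distrib_right power_add mult.assoc mult.left_commute intro!: sum.cong)
    also have "\<dots> = sum g (SIGMA A:Pow S. Pow A)"
      using fS by (subst sum.Sigma) (auto intro: finite_subset)
    also have "\<dots> = (\<Sum>q\<in>(SIGMA B:Pow S. Pow (S - B)). g (case q of (B, C) \<Rightarrow> (B \<union> C, B)))"
      by (rule sum_pairs[OF fS])
    also have "\<dots> = sum h (SIGMA B:Pow S. Pow (S - B))"
    proof (rule sum.cong[OF refl])
      fix q assume q: "q \<in> (SIGMA B:Pow S. Pow (S - B))"
      obtain B C where pq: "q = (B,C)" by (cases q)
      with q have BC: "B \<subseteq> S" "C \<subseteq> S - B" by auto
      have fB: "finite B" "finite C" using BC fS finite_subset by blast+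
      have u1: "S - B = C \<union> (S - B - C)" using BC by auto
      have e1: "inv_count B (S - B) = inv_count B C + inv_count B (S - B - C)"
        by (subst u1, rule inv_union_right) (use fB fS in auto)
      have e2: "inv_count (B \<union> C) (S - B - C) = inv_count B (S - B - C) + inv_count C (S - B - C)"
        by (rule inv_union_left) (use fB fS BC in auto)
      have e3: "B \<union> C - B = C" "S - (B \<union> C) = S - B - C" using BC by auto
      have ex: "inv_count B (B \<union> C - B) + inv_count (B \<union> C) (S - (B \<union> C)) = inv_count B (S - B) + inv_count C (S - B - C)"
        unfolding e3 e1 e2 by simp
      show "g (case q of (B, C) \<Rightarrow> (B \<union> C, B)) = h q"
        unfolding pq g_def h_def by (simp only: prod.case ex) (simp only: e3)
    qed
    also have "\<dots> = (\<Sum>B\<in>Pow S. \<Sum>C\<in>Pow (S - B). h (B,C))"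
      using fS by (subst sum.Sigma) (auto intro: finite_subset)
    also have "\<dots> = wedge a (wedge b c) S"
      unfolding wedge_def h_def using True
      by (auto simp: sum_distrib_left sum_distrib_right power_add mult.assoc mult.left_commute intro!: sum.cong)
    finally show ?thesis .
  qed
qed

definition zf :: "real form" where "zf = (\<lambda>S. 0)"

lemma wedge_sum_left: "finite F \<Longrightarrow> wedge (\<lambda>T. \<Sum>i\<in>F. f i T) b S = (\<Sum>i\<in>F. wedge (f i) (b::real form) S)"
  unfolding wedge_def by (auto simp: sum_distrib_left sum_distrib_right mult_ac intro: sum.swap)

lemma wedge_sum_right: "finite F \<Longrightarrow> wedge b (\<lambda>T. \<Sum>i\<in>F. f i T) S = (\<Sum>i\<in>F. wedge (b::real form) (f i) S)"
  unfolding wedge_def by (auto simp: sum_distrib_left sum_distrib_right mult_ac intro: sum.swap)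

lemma wedge_smult_left: "wedge (form_smult c a) b = form_smult c (wedge a (b::real form))"
  unfolding wedge_def form_smult_def by (auto simp: sum_distrib_left mult_ac)

lemma wedge_smult_right: "wedge a (form_smult c b) = form_smult c (wedge a (b::real form))"
  unfolding wedge_def form_smult_def by (auto simp: sum_distrib_left mult_ac)

lemma wedge_add_left: "wedge (form_add a a') b = form_add (wedge a b) (wedge a' (b::real form))"
  unfolding wedge_def form_add_def by (auto simp: sum.distrib algebra_simps)

lemma wedge_add_right: "wedge a (form_add b b') = form_add (wedge a b) (wedge a (b'::real form))"
  unfolding wedge_def form_add_def by (auto simp: sum.distrib algebra_simps)

lemma wedge_zf_left: "wedge zf b = zf" unfolding wedge_def zf_def by auto
lemma wedge_zf_right: "wedge b zf = zf" unfolding wedge_def zf_def by auto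

lemma wedge_unit_right: "wedge a unit_form S = (if S \<subseteq> {..<6} then a S else (0::real))"
proof -
  have "S \<subseteq> {..<6} \<Longrightarrow> (\<Sum>A\<in>Pow S. (-1) ^ inv_count A (S - A) * a A * unit_form (S - A)) = a S"
  proof -
    assume S: "S \<subseteq> {..<6}"
    have fS: "finite S" using S finite_subset by blast
    have "(\<Sum>A\<in>Pow S - {S}. (-1) ^ inv_count A (S - A) * a A * unit_form (S - A)) = (0::real)"
      by (rule sum.neutral) (auto simp: unit_form_def)
    moreover have "inv_count S {} = 0" by (simp add: inv_count_def)
    ultimately show ?thesis using fS by (subst sum.remove[of _ S]) (auto simp: unit_form_def)
  qed
  then show ?thesis unfolding wedge_def by auto
qed

lemma wedge_unit_left: "wedge unit_form a S = (if S \<subseteq> {..<6} then a S else (0::real))"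
proof -
  have "S \<subseteq> {..<6} \<Longrightarrow> (\<Sum>A\<in>Pow S. (-1) ^ inv_count A (S - A) * unit_form A * a (S - A)) = a S"
    by (subst sum.remove[of _ "{}"]) (auto simp: unit_form_def finite_subset inv_count_def intro!: sum.neutral)
  then show ?thesis unfolding wedge_def by auto
qed

lemma kform_supp: "is_k_form k a \<Longrightarrow> \<not> (S \<subseteq> {..<6} \<and> card S = k) \<Longrightarrow> a S = 0"
  unfolding is_k_form_def by auto

lemma wedge_degree:
  assumes "is_k_form k a" "is_k_form l (b::real form)"
  shows "is_k_form (k + l) (wedge a b)"
  unfolding is_k_form_def
proof (intro allI impI)
  fix S assume "wedge a b S \<noteq> 0"
  then have S: "S \<subseteq> {..<6}" and "(\<Sum>A\<in>Pow S. (-1) ^ inv_count A (S - A) * a A * b (S - A)) \<noteq> 0"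
    unfolding wedge_def by (auto split: if_splits)
  then obtain A where A: "A \<subseteq> S" "a A \<noteq> 0" "b (S - A) \<noteq> 0"
    by (metis (no_types, lifting) PowD mult_eq_0_iff sum.neutral)
  then have "card A = k" "card (S - A) = l" using assms unfolding is_k_form_def by auto
  moreover have "finite S" using S finite_subset by blast
  ultimately have "card S = k + l" using A(1) by (metis card_Diff_subset finite_subset card_mono le_add_diff_inverse add.commute)
  then show "S \<subseteq> {..<6} \<and> card S = k + l" using S by simp
qed

lemma wedge_comm:
  assumes "is_k_form k a" "is_k_form l (b::real form)"
  shows "wedge b a = form_smult ((-1) ^ (k * l)) (wedge a b)"
proof
  fix S
  show "wedge b a S = form_smult ((-1) ^ (k * l)) (wedge a b) S"
  proof (cases "S \<subseteq> {..<6}")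
    case False then show ?thesis by (simp add: wedge_def form_smult_def)
  next
    case True
    have fS: "finite S" using True finite_subset by blast
    have "wedge b a S = (\<Sum>A\<in>Pow S. (-1) ^ inv_count (S - A) A * b (S - A) * a A)"
      unfolding wedge_def using True
      apply simp
      apply (rule sum.reindex_bij_witness[where i="\<lambda>A. S - A" and j="\<lambda>A. S - A"])
      by (auto simp: Diff_Diff_Int Int_absorb1 Int_absorb2)
    also have "\<dots> = (\<Sum>A\<in>Pow S. (-1) ^ (k * l) * ((-1) ^ inv_count A (S - A) * a A * b (S - A)))"
    proof (rule sum.cong[OF refl])
      fix A assume A: "A \<in> Pow S"
      have e: "S - A - (S - A) = {}" "S - (S - A) = A" using A by auto
      show "(-1) ^ inv_count (S - A) A * b (S - A) * a A = (-1) ^ (k * l) * ((-1) ^ inv_count A (S - A) * a A * b (S - A))"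
      proof (cases "a A \<noteq> 0 \<and> b (S - A) \<noteq> 0")
        case True
        then have "card A = k" "card (S - A) = l" using assms unfolding is_k_form_def by auto
        moreover have "finite A" "finite (S - A)" using A fS finite_subset by auto
        ultimately have "inv_count A (S - A) + inv_count (S - A) A = k * l"
          using inv_swap[of A "S - A"] by auto
        then have "(-1::real) ^ (k * l) = (-1) ^ inv_count A (S - A) * (-1) ^ inv_count (S - A) A"
          by (metis power_add)
        moreover have "(-1::real) ^ inv_count A (S - A) * (-1) ^ inv_count A (S - A) = 1"
          by (simp add: power_add[symmetric])
        ultimately show ?thesis
          by (metis (no_types, lifting) mult.assoc mult.commute mult.left_neutral)
      next
        case False
        then show ?thesis by auto
      qed
    qed
    also have "\<dots> = form_smult ((-1) ^ (k * l)) (wedge a b) S"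
      unfolding wedge_def form_smult_def using True by (simp add: sum_distrib_left)
    finally show ?thesis .
  qed
qed

lemma smult_1[simp]: "form_smult 1 a = (a::real form)" by (simp add: form_smult_def)
lemma smult_smult[simp]: "form_smult c (form_smult d a) = form_smult (c * d) (a::real form)"
  by (simp add: form_smult_def mult.assoc)
lemma smult_zf[simp]: "form_smult c zf = zf" by (simp add: form_smult_def zf_def)
lemma smult_0[simp]: "form_smult 0 a = zf" by (simp add: form_smult_def zf_def)

lemma one_form_anti: "is_k_form 1 f \<Longrightarrow> is_k_form 1 (g::real form) \<Longrightarrow> wedge g f = form_smult (-1) (wedge f g)"
  using wedge_comm[of 1 f 1 g] by simp

lemma one_form_sq: "is_k_form 1 (f::real form) \<Longrightarrow> wedge f f = zf"
proof
  fix S assume "is_k_form 1 f"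
  then have "wedge f f S = - wedge f f S" using one_form_anti[of f f] by (metis form_smult_def mult_minus1)
  then show "wedge f f S = zf S" by (simp add: zf_def)
qed

lemma kform_sub: "is_k_form k a \<Longrightarrow> (\<And>S. a S \<noteq> 0 \<Longrightarrow> S \<subseteq> {..<6})" unfolding is_k_form_def by auto

lemma wedge_unit_right_k: "is_k_form k a \<Longrightarrow> wedge a unit_form = (a::real form)"
  by (rule ext) (auto simp: wedge_unit_right dest: kform_sub)

lemma elem_empty[simp]: "elem_form e {} = unit_form" by (simp add: elem_form_def)

lemma elem_insert:
  assumes "finite K" "\<forall>x\<in>K. k < x"
  shows "elem_form e (insert k K) = wedge (e k) (elem_form e K)"
proof -
  have m: "Min (insert k K) = k" using assms by (auto intro!: Min_eqI)
  have d: "insert k K - {k} = K" using assms by auto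
  show ?thesis unfolding elem_form_def
    by (subst sorted_list_of_set_nonempty) (use assms m d in auto)
qed

lemma unit_deg: "is_k_form 0 (unit_form :: real form)" by (simp add: is_k_form_def unit_form_def)

lemma elem_deg:
  assumes e: "\<forall>i<6. is_k_form 1 (e i)" and I: "I \<subseteq> {..<6}"
  shows "is_k_form (card I) (elem_form e I)"
proof -
  have "finite I" using I finite_subset by blast
  then show ?thesis using I
  proof (induction I rule: finite_linorder_min_induct)
    case empty then show ?case by (simp add: unit_deg)
  next
    case (insert b A)
    have "b \<notin> A" using insert by auto
    then have "card (insert b A) = 1 + card A" using insert by simp
    moreover have "is_k_form (1 + card A) (wedge (e b) (elem_form e A))"
      by (rule wedge_degree) (use insert e in auto)
    ultimately show ?case using elem_insert[of A b e] insert by simp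
  qed
qed

lemma elem_single: "\<forall>i<6. is_k_form 1 (e i) \<Longrightarrow> m < 6 \<Longrightarrow> elem_form e {m} = e m"
  using elem_insert[of "{}" m e] wedge_unit_right_k[of 1 "e m"] by simp

lemma e_wedge_elem:
  assumes e: "\<forall>i<6. is_k_form 1 (e i)" and I: "I \<subseteq> {..<6}" and m: "m < 6"
  shows "wedge (e m) (elem_form e I) = (if m \<in> I then zf else form_smult ((-1) ^ card {x\<in>I. x < m}) (elem_form e (insert m I)))"
proof -
  have "finite I" using I finite_subset by blast
  then show ?thesis using I
  proof (induction I rule: finite_linorder_min_induct)
    case empty
    then show ?case using elem_single[OF e m] elem_insert[of "{}" m e] by simp
  next
    case (insert k K)
    have kK: "k \<notin> K" using insert by auto
    have k6: "k < 6" using insert by auto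
    have EI: "elem_form e (insert k K) = wedge (e k) (elem_form e K)" using elem_insert insert by blast
    consider "m < k" | "m = k" | "k < m" by linarith
    then show ?case
    proof cases
      case 1
      then have "m \<notin> insert k K" using insert by auto
      moreover have "{x \<in> insert k K. x < m} = {}" using 1 insert by auto
      then have "card {x \<in> insert k K. x < m} = 0" by (simp only: card.empty)
      moreover have "elem_form e (insert m (insert k K)) = wedge (e m) (elem_form e (insert k K))"
        by (rule elem_insert) (use 1 insert in auto)
      ultimately show ?thesis by (simp only: if_False power_0 smult_1)
    next
      case 2
      have "wedge (e m) (elem_form e (insert k K)) = wedge (wedge (e m) (e m)) (elem_form e K)"
        using EI 2 wedge_assoc by simp
      also have "\<dots> = zf" using one_form_sq[of "e m"] e m wedge_zf_left by simp
      finally show ?thesis using 2 by simp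
    next
      case 3
      have "wedge (e m) (elem_form e (insert k K)) = wedge (wedge (e m) (e k)) (elem_form e K)"
        using EI wedge_assoc by simp
      also have "\<dots> = form_smult (-1) (wedge (e k) (wedge (e m) (elem_form e K)))"
        using one_form_anti[of "e k" "e m"] e m k6 wedge_smult_left wedge_assoc by simp
      finally have A: "wedge (e m) (elem_form e (insert k K)) = form_smult (-1) (wedge (e k) (wedge (e m) (elem_form e K)))" .
      have IH: "wedge (e m) (elem_form e K) = (if m \<in> K then zf else form_smult ((-1) ^ card {x\<in>K. x < m}) (elem_form e (insert m K)))"
        using insert by auto
      show ?thesis
      proof (cases "m \<in> K")
        case True
        then show ?thesis using A IH wedge_zf_right by simp
      next
        case False
        have mI: "m \<notin> insert k K" using False 3 by auto
        have E2: "elem_form e (insert k (insert m K)) = wedge (e k) (elem_form e (insert m K))"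
          by (rule elem_insert) (use insert 3 in auto)
        have c: "{x \<in> insert k K. x < m} = insert k {x \<in> K. x < m}" using 3 by auto
        have fK: "finite {x \<in> K. x < m}" using insert by auto
        have cc: "card {x \<in> insert k K. x < m} = Suc (card {x \<in> K. x < m})"
          unfolding c using fK kK by simp
        have ins: "insert k (insert m K) = insert m (insert k K)" by auto
        have ccp: "(-1::real) ^ card {x \<in> insert k K. x < m} = - ((-1) ^ card {x \<in> K. x < m})"
          by (simp only: cc power_Suc mult_minus1)
        have "wedge (e m) (elem_form e (insert k K)) = form_smult (- ((-1) ^ card {x \<in> K. x < m})) (elem_form e (insert m (insert k K)))"
          using A IH False E2 wedge_smult_right by (simp add: ins[symmetric])
        then show ?thesis using mI by (simp only: ccp if_False)
      qed
    qed
  qed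
qed

lemma inv_single: "inv_count {k} J = card {x \<in> J. x < k}"
  unfolding inv_count_def
  by (rule bij_betw_same_card[of snd]) (auto simp: bij_betw_def inj_on_def image_def)

lemma elem_supp: "\<forall>i<6. is_k_form 1 (e i) \<Longrightarrow> I \<subseteq> {..<6} \<Longrightarrow> elem_form e I S \<noteq> 0 \<Longrightarrow> S \<subseteq> {..<6}"
  using elem_deg kform_sub by blast

lemma elem_mult:
  assumes e: "\<forall>i<6. is_k_form 1 (e i)" and I: "I \<subseteq> {..<6}" and J: "J \<subseteq> {..<6}"
  shows "wedge (elem_form e I) (elem_form e J) = (if I \<inter> J = {} then form_smult ((-1) ^ inv_count I J) (elem_form e (I \<union> J)) else zf)"
proof -
  have fJ: "finite J" using J finite_subset by blast
  have "finite I" using I finite_subset by blast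
  then show ?thesis using I
  proof (induction I rule: finite_linorder_min_induct)
    case empty
    have "wedge unit_form (elem_form e J) = elem_form e J"
      by (rule ext) (use elem_supp[OF e J] in \<open>auto simp: wedge_unit_left\<close>)
    moreover have "inv_count {} J = 0" by (simp add: inv_count_def)
    ultimately show ?case by simp
  next
    case (insert k K)
    have kK: "k \<notin> K" using insert by auto
    have k6: "k < 6" and K6: "K \<subseteq> {..<6}" using insert by auto
    have "wedge (elem_form e (insert k K)) (elem_form e J) = wedge (e k) (wedge (elem_form e K) (elem_form e J))"
      using elem_insert[of K k e] insert wedge_assoc by simp
    also have "\<dots> = (if K \<inter> J = {} then form_smult ((-1) ^ inv_count K J) (wedge (e k) (elem_form e (K \<union> J))) else zf)"
      using insert.IH[OF K6] wedge_zf_right wedge_smult_right by simp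
    finally have A: "wedge (elem_form e (insert k K)) (elem_form e J) = (if K \<inter> J = {} then form_smult ((-1) ^ inv_count K J) (wedge (e k) (elem_form e (K \<union> J))) else zf)" .
    show ?case
    proof (cases "K \<inter> J = {}")
      case False
      then show ?thesis using A by auto
    next
      case True
      have B: "wedge (e k) (elem_form e (K \<union> J)) = (if k \<in> K \<union> J then zf else form_smult ((-1) ^ card {x\<in>K \<union> J. x < k}) (elem_form e (insert k (K \<union> J))))"
        by (rule e_wedge_elem[OF e _ k6]) (use K6 J in auto)
      show ?thesis
      proof (cases "k \<in> J")
        case True
        then show ?thesis using A B \<open>K \<inter> J = {}\<close> by auto
      next
        case False
        have s1: "{x\<in>K \<union> J. x < k} = {x\<in>J. x < k}" using insert by auto
        have s2: "inv_count (insert k K) J = inv_count {k} J + inv_count K J"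
          using inv_union_left[of "{k}" K J] insert fJ kK by simp
        have "(-1::real) ^ inv_count (insert k K) J = (-1) ^ inv_count K J * (-1) ^ card {x\<in>K \<union> J. x < k}"
          unfolding s2 s1 inv_single by (simp add: power_add mult.commute)
        moreover have "insert k K \<inter> J = {}" using False \<open>K \<inter> J = {}\<close> by auto
        moreover have "insert k (K \<union> J) = insert k K \<union> J" by auto
        ultimately show ?thesis using A B False kK \<open>K \<inter> J = {}\<close> by simp
      qed
    qed
  qed
qed

lemma wedge_scale_left: "wedge (\<lambda>T. c * f T) b S = c * wedge f (b::real form) S"
  using wedge_smult_left[of c f b] unfolding form_smult_def by metis

lemma wedge_scale_right: "wedge b (\<lambda>T. c * f T) S = c * wedge (b::real form) f S"
  using wedge_smult_right[of b c f] unfolding form_smult_def by metis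

lemma expand_hom:
  assumes e: "\<forall>i<6. is_k_form 1 (e i)"
  shows "wedge (expand e c) (expand e d) = expand e (wedge c d)"
proof
  fix S
  let ?U = "{..<6::nat}"
  define G where "G = (\<lambda>(K,A). (-1) ^ inv_count A (K - A) * c A * d (K - A) * elem_form e K S)"
  have L: "wedge (expand e c) (expand e d) S
      = (\<Sum>I\<in>Pow ?U. \<Sum>J\<in>Pow ?U. c I * d J * wedge (elem_form e I) (elem_form e J) S)"
    unfolding expand_def
    by (simp add: wedge_sum_left wedge_sum_right wedge_scale_left wedge_scale_right mult.assoc sum_distrib_left)
  also have "\<dots> = (\<Sum>I\<in>Pow ?U. \<Sum>J\<in>Pow (?U - I). c I * d J * ((-1) ^ inv_count I J * elem_form e (I \<union> J) S))"
  proof (rule sum.cong[OF refl])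
    fix I assume I: "I \<in> Pow ?U"
    have "(\<Sum>J\<in>Pow ?U. c I * d J * wedge (elem_form e I) (elem_form e J) S)
        = (\<Sum>J\<in>Pow ?U. if J \<in> Pow (?U - I) then c I * d J * ((-1) ^ inv_count I J * elem_form e (I \<union> J) S) else 0)"
    proof (rule sum.cong[OF refl])
      fix J assume J: "J \<in> Pow ?U"
      have "J \<in> Pow (?U - I) \<longleftrightarrow> I \<inter> J = {}" using J by auto
      then show "c I * d J * wedge (elem_form e I) (elem_form e J) S = (if J \<in> Pow (?U - I) then c I * d J * ((-1) ^ inv_count I J * elem_form e (I \<union> J) S) else 0)"
        using elem_mult[OF e, of I J] I J by (simp add: form_smult_def zf_def)
    qed
    also have "\<dots> = (\<Sum>J\<in>Pow (?U - I). c I * d J * ((-1) ^ inv_count I J * elem_form e (I \<union> J) S))"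
    proof -
      have "Pow ?U \<inter> {x. x \<subseteq> ?U - I} = Pow (?U - I)" by auto
      then show ?thesis by (subst sum.If_cases) auto
    qed
    finally show "(\<Sum>J\<in>Pow ?U. c I * d J * wedge (elem_form e I) (elem_form e J) S) = (\<Sum>J\<in>Pow (?U - I). c I * d J * ((-1) ^ inv_count I J * elem_form e (I \<union> J) S))" .
  qed
  also have "\<dots> = (\<Sum>B\<in>Pow ?U. \<Sum>C\<in>Pow (?U - B). G (B \<union> C, B))"
  proof (intro sum.cong refl)
    fix B C assume "B \<in> Pow ?U" "C \<in> Pow (?U - B)"
    then have "B \<union> C - B = C" by auto
    then show "c B * d C * ((- 1) ^ inv_count B C * elem_form e (B \<union> C) S) = G (B \<union> C, B)"
      by (simp add: G_def mult_ac)
  qed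
  also have "\<dots> = (\<Sum>q\<in>(SIGMA B:Pow ?U. Pow (?U - B)). G (case q of (B, C) \<Rightarrow> (B \<union> C, B)))"
    using sum.Sigma[of "Pow ?U" "\<lambda>B. Pow (?U - B)" "\<lambda>B C. G (B \<union> C, B)"] by (simp add: split_def)
  also have "\<dots> = (\<Sum>p\<in>(SIGMA K:Pow ?U. Pow K). G p)"
    by (rule sum_pairs[symmetric]) simp
  also have "\<dots> = expand e (wedge c d) S"
    unfolding expand_def wedge_def G_def
    by (subst sum.Sigma[symmetric]) (auto simp: sum_distrib_right intro!: sum.cong intro: finite_subset)
  finally show "wedge (expand e c) (expand e d) S = expand e (wedge c d) S" .
qed

lemma inverse_exists:
  assumes b: "is_dual_basis e"
  shows "\<exists>N. \<forall>k<6. \<forall>S. (if S = {k} then 1 else 0) = (\<Sum>j<6. N j k * e j S)"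
proof -
  define M where "M = mat 6 6 (\<lambda>(i,j). (e j {i}) :: real)"
  have Mc: "M \<in> carrier_mat 6 6" unfolding M_def by simp
  have one: "\<And>j S. j < 6 \<Longrightarrow> e j S \<noteq> 0 \<Longrightarrow> \<exists>i<6. S = {i}"
  proof -
    fix j S assume "j < 6" "e j S \<noteq> 0"
    then have "S \<subseteq> {..<6}" "card S = 1" using b unfolding is_dual_basis_def is_k_form_def by auto
    then obtain x where "S = {x}" "S \<subseteq> {..<6}" by (auto simp: card_Suc_eq)
    then show "\<exists>i<6. S = {i}" by auto
  qed
  have "det M \<noteq> 0"
  proof
    assume "det M = 0"
    then obtain v where v: "v \<in> carrier_vec 6" "v \<noteq> 0\<^sub>v 6" "M *\<^sub>v v = 0\<^sub>v 6"
      using det_0_iff_vec_prod_zero_field[OF Mc] by blast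
    have "\<forall>S. (\<Sum>j<6. v $ j * e j S) = 0"
    proof
      fix S
      show "(\<Sum>j<6. v $ j * e j S) = 0"
      proof (cases "\<exists>i<6. S = {i}")
        case True
        then obtain i where i: "i < 6" "S = {i}" by blast
        have "(M *\<^sub>v v) $ i = 0" using v i by simp
        moreover have "(M *\<^sub>v v) $ i = (\<Sum>j<6. v $ j * e j S)"
          using v(1) i unfolding M_def by (simp add: scalar_prod_def lessThan_atLeast0 mult.commute)
        ultimately show ?thesis by simp
      next
        case False
        then have "\<forall>j<6. e j S = 0" using one by blast
        then show ?thesis by simp
      qed
    qed
    then have "\<forall>i<6. v $ i = 0" using b unfolding is_dual_basis_def by blast
    then have "v = 0\<^sub>v 6" using v(1) by (auto simp: vec_eq_iff)
    then show False using v(2) by simp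
  qed
  from det_non_zero_imp_unit[OF Mc this, of "()"]
  obtain B where B: "B \<in> carrier_mat 6 6" "M * B = 1\<^sub>m 6"
    unfolding Units_def ring_mat_def by auto
  show ?thesis
  proof (intro exI allI impI)
    fix k S assume k: "(k::nat) < 6"
    show "(if S = {k} then 1 else 0) = (\<Sum>j<6. B $$ (j, k) * e j S)"
    proof (cases "\<exists>i<6. S = {i}")
      case True
      then obtain i where i: "i < 6" "S = {i}" by blast
      have "(M * B) $$ (i, k) = (\<Sum>j<6. B $$ (j, k) * e j S)"
        using B(1) i k unfolding M_def by (simp add: scalar_prod_def lessThan_atLeast0 mult.commute)
      moreover have "(M * B) $$ (i, k) = (if S = {k} then 1 else 0)" using B(2) i k by auto
      ultimately show ?thesis by simp
    next
      case False
      then have "S \<noteq> {k}" using k by auto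
      moreover have "\<forall>j<6. e j S = 0" using False one by blast
      ultimately show ?thesis by simp
    qed
  qed
qed

definition delta :: "nat set \<Rightarrow> real form" where "delta I = (\<lambda>S. if S = I then 1 else 0)"

lemma expand_delta: "I \<subseteq> {..<6} \<Longrightarrow> expand e (delta I) = elem_form e I"
proof
  fix S assume I: "I \<subseteq> {..<6}"
  have "expand e (delta I) S = (\<Sum>J\<in>Pow {..<6}. if J = I then elem_form e J S else 0)"
    unfolding expand_def delta_def by (rule sum.cong) auto
  also have "\<dots> = elem_form e I S" using I by (subst sum.delta) auto
  finally show "expand e (delta I) S = elem_form e I S" .
qed

lemma expand_add: "expand e (\<lambda>I. c I + d I) S = expand e c S + expand e d S"
  unfolding expand_def by (simp add: algebra_simps sum.distrib)

lemma expand_scale: "expand e (\<lambda>I. r * c I) S = r * expand e c S"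
  unfolding expand_def by (simp add: sum_distrib_left mult.assoc)

lemma expand_sum: "finite F \<Longrightarrow> expand e (\<lambda>I. \<Sum>j\<in>F. f j I) S = (\<Sum>j\<in>F. expand e (f j) S)"
  unfolding expand_def by (simp add: sum_distrib_right sum.swap[of _ F])

lemma wedge_delta_single:
  assumes kK: "\<forall>x\<in>K. k < x" and sub: "insert k K \<subseteq> {..<6}"
  shows "wedge (delta {k}) (delta K) = delta (insert k K)"
proof
  fix S
  have kn: "k \<notin> K" using kK by auto
  show "wedge (delta {k}) (delta K) S = delta (insert k K) S"
  proof (cases "S \<subseteq> {..<6}")
    case False
    then have "S \<noteq> insert k K" using sub by auto
    then show ?thesis using False by (simp add: wedge_def delta_def)
  next
    case True
    have "wedge (delta {k}) (delta K) S = (\<Sum>A\<in>Pow S. if A = {k} then (-1) ^ inv_count {k} (S - {k}) * delta K (S - {k}) else 0)"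
      unfolding wedge_def using True by (auto simp: delta_def intro!: sum.cong)
    also have "\<dots> = (if k \<in> S then (-1) ^ inv_count {k} (S - {k}) * delta K (S - {k}) else 0)"
      using True finite_subset sum.delta[of "Pow S" "{k}" "\<lambda>_. (-1) ^ inv_count {k} (S - {k}) * delta K (S - {k})"]
      by (simp add: finite_subset)
    also have "\<dots> = delta (insert k K) S"
    proof (cases "S = insert k K")
      case True
      then have "S - {k} = K" using kn by auto
      moreover have "inv_count {k} K = 0" unfolding inv_single using kK by auto
      ultimately show ?thesis using True by (simp add: delta_def)
    next
      case False
      then have "\<not> (k \<in> S \<and> S - {k} = K)" by auto
      then show ?thesis using False by (auto simp: delta_def)
    qed
    finally show ?thesis .
  qed
qed

definition inspan :: "(nat \<Rightarrow> real form) \<Rightarrow> real form \<Rightarrow> bool" where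
  "inspan e X \<longleftrightarrow> (\<exists>c. X = expand e c)"

lemma delta_top_span:
  assumes b: "is_dual_basis e"
  shows "inspan e (delta {..<6})"
proof -
  have e1: "\<forall>i<6. is_k_form 1 (e i)" using b unfolding is_dual_basis_def by auto
  obtain N where N: "\<forall>k<6. \<forall>S. (if S = {k} then 1 else 0) = (\<Sum>j<6. N j k * e j S)"
    using inverse_exists[OF b] by blast
  have dk: "inspan e (delta {k})" if k: "k < 6" for k
  proof -
    have "delta {k} = expand e (\<lambda>I. \<Sum>j<6. N j k * delta {j} I)"
    proof
      fix S
      have "expand e (\<lambda>I. \<Sum>j<6. N j k * delta {j} I) S = (\<Sum>j<6. N j k * expand e (delta {j}) S)"
        by (simp add: expand_sum expand_scale)
      also have "\<dots> = (\<Sum>j<6. N j k * e j S)"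
        using expand_delta[of "{_}" e] elem_single[OF e1] by simp
      also have "\<dots> = delta {k} S" using N k by (simp add: delta_def)
      finally show "delta {k} S = expand e (\<lambda>I. \<Sum>j<6. N j k * delta {j} I) S" by simp
    qed
    then show ?thesis unfolding inspan_def by blast
  qed
  have "inspan e (delta I)" if "I \<subseteq> {..<6}" for I
  proof -
    have "finite I" using that finite_subset by blast
    then show ?thesis using that
    proof (induction I rule: finite_linorder_min_induct)
      case empty
      have "delta {} = unit_form" by (simp add: delta_def unit_form_def)
      then have "delta {} = expand e (delta {})" using expand_delta[of "{}" e] by simp
      then show ?case unfolding inspan_def by blast
    next
      case (insert k K)
      obtain c where c: "delta {k} = expand e c" using dk[of k] insert unfolding inspan_def by auto
      obtain d where d: "delta K = expand e d" using insert unfolding inspan_def by auto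
      have "delta (insert k K) = wedge (delta {k}) (delta K)"
        using wedge_delta_single insert by metis
      also have "\<dots> = expand e (wedge c d)" using c d expand_hom e1 by simp
      finally show ?case unfolding inspan_def by blast
    qed
  qed
  then show ?thesis by simp
qed

lemma top_nonzero:
  assumes b: "is_dual_basis e"
  shows "elem_form e {..<6} {..<6} \<noteq> 0"
proof
  assume z: "elem_form e {..<6} {..<6} = 0"
  have e1: "\<forall>i<6. is_k_form 1 (e i)" using b unfolding is_dual_basis_def by auto
  obtain c where c: "delta {..<6} = expand e c" using delta_top_span[OF b] unfolding inspan_def by blast
  have "1 = expand e c {..<6}" using c by (metis delta_def)
  also have "\<dots> = (\<Sum>I\<in>Pow {..<6}. c I * elem_form e I {..<6})" by (simp add: expand_def)
  also have "\<dots> = 0"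
  proof (rule sum.neutral, intro ballI)
    fix I assume I: "I \<in> Pow {..<6::nat}"
    show "c I * elem_form e I {..<6} = 0"
    proof (cases "I = {..<6}")
      case True then show ?thesis using z by simp
    next
      case False
      then have "card I \<noteq> card {..<6::nat}" using I by (metis PowD card_subset_eq finite_lessThan)
      then have "elem_form e I {..<6} = 0" using elem_deg[OF e1, of I] I kform_supp[of "card I" "elem_form e I" "{..<6}"] by simp
      then show ?thesis by simp
    qed
  qed
  finally show False by simp
qed

lemma expand_zero_imp:
  assumes b: "is_dual_basis e" and f0: "\<forall>S. \<not> S \<subseteq> {..<6} \<longrightarrow> f S = 0"
    and z: "\<forall>S. expand e f S = 0"
  shows "f K = 0"
proof (cases "K \<subseteq> {..<6}")
  case False then show ?thesis using f0 by auto
next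
  case True
  let ?U = "{..<6::nat}"
  let ?Kc = "?U - K"
  have e1: "\<forall>i<6. is_k_form 1 (e i)" using b unfolding is_dual_basis_def by auto
  have "expand e f = (\<lambda>S. 0)" using z by auto
  then have "wedge (expand e f) (elem_form e ?Kc) ?U = 0" by (simp add: wedge_def)
  moreover have "wedge (expand e f) (elem_form e ?Kc) ?U = (\<Sum>I\<in>Pow ?U. f I * wedge (elem_form e I) (elem_form e ?Kc) ?U)"
    unfolding expand_def by (simp add: wedge_sum_left wedge_scale_left)
  moreover have "\<dots> = (\<Sum>I\<in>Pow ?U. if I = K then f K * ((-1) ^ inv_count K ?Kc * elem_form e ?U ?U) else 0)"
  proof (rule sum.cong[OF refl])
    fix I assume I: "I \<in> Pow ?U"
    have W: "wedge (elem_form e I) (elem_form e ?Kc) = (if I \<inter> ?Kc = {} then form_smult ((-1) ^ inv_count I ?Kc) (elem_form e (I \<union> ?Kc)) else zf)"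
      using elem_mult[OF e1, of I ?Kc] I by auto
    show "f I * wedge (elem_form e I) (elem_form e ?Kc) ?U = (if I = K then f K * ((-1) ^ inv_count K ?Kc * elem_form e ?U ?U) else 0)"
    proof (cases "I = K")
      case True
      have "K \<union> ?Kc = ?U" using \<open>K \<subseteq> ?U\<close> by auto
      then show ?thesis using W True by (simp add: form_smult_def)
    next
      case False
      show ?thesis
      proof (cases "I \<inter> ?Kc = {}")
        case True
        then have "I \<subseteq> K" using I by auto
        then have "I \<union> ?Kc \<noteq> ?U" using False \<open>K \<subseteq> ?U\<close> by auto
        moreover have "I \<union> ?Kc \<subseteq> ?U" using I by auto
        ultimately have "card (I \<union> ?Kc) \<noteq> 6"
          by (metis card_lessThan card_subset_eq finite_lessThan)
        then have "elem_form e (I \<union> ?Kc) ?U = 0"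
          using elem_deg[OF e1, of "I \<union> ?Kc"] \<open>I \<union> ?Kc \<subseteq> ?U\<close> kform_supp[of "card (I \<union> ?Kc)" "elem_form e (I \<union> ?Kc)" ?U] by simp
        then show ?thesis using W True False by (simp add: form_smult_def)
      next
        case False
        then show ?thesis using W \<open>I \<noteq> K\<close> by (simp add: zf_def)
      qed
    qed
  qed
  moreover have "\<dots> = f K * ((-1) ^ inv_count K ?Kc * elem_form e ?U ?U)"
    using True sum.delta[of "Pow ?U" K "\<lambda>_. f K * ((-1) ^ inv_count K ?Kc * elem_form e ?U ?U)"] by simp
  ultimately have "f K * ((-1) ^ inv_count K ?Kc * elem_form e ?U ?U) = 0" by simp
  then show ?thesis using top_nonzero[OF b] by simp
qed

lemma coords_eq:
  assumes b: "is_dual_basis e" and c0: "\<forall>S. \<not> S \<subseteq> {..<6} \<longrightarrow> c S = 0" and bc: "x = expand e c"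
  shows "coords e x = c"
  unfolding coords_def
proof (rule the_equality)
  show "(\<forall>S. \<not> S \<subseteq> {..<6} \<longrightarrow> c S = 0) \<and> expand e c = x" using c0 bc by simp
next
  fix c' assume c': "(\<forall>S. \<not> S \<subseteq> {..<6} \<longrightarrow> c' S = 0) \<and> expand e c' = x"
  show "c' = c"
  proof
    fix K
    have "(\<lambda>I. c' I + (-1) * c I) K = 0"
    proof (rule expand_zero_imp[OF b])
      show "\<forall>S. \<not> S \<subseteq> {..<6} \<longrightarrow> c' S + - 1 * c S = 0" using c' c0 by simp
      show "\<forall>S. expand e (\<lambda>I. c' I + - 1 * c I) S = 0"
      proof
        fix S show "expand e (\<lambda>I. c' I + - 1 * c I) S = 0"
          using c' bc expand_add[of e c' "\<lambda>I. - 1 * c I" S] expand_scale[of e "-1" c S] by simp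
      qed
    qed
    then show "c' K = c K" by simp
  qed
qed

lemma cs5: "(a1*b1 + a2*b2 + a3*b3 + a4*b4 + a5*b5)^2 \<le> (a1^2+a2^2+a3^2+a4^2+a5^2) * (b1^2+b2^2+b3^2+b4^2+b5^2)"
  for a1 a2 a3 a4 a5 b1 b2 b3 b4 b5 :: real
proof -
  have "(a1^2+a2^2+a3^2+a4^2+a5^2) * (b1^2+b2^2+b3^2+b4^2+b5^2) - (a1*b1 + a2*b2 + a3*b3 + a4*b4 + a5*b5)^2
    = (a1*b2-a2*b1)^2 + (a1*b3-a3*b1)^2 + (a1*b4-a4*b1)^2 + (a1*b5-a5*b1)^2 + (a2*b3-a3*b2)^2
    + (a2*b4-a4*b2)^2 + (a2*b5-a5*b2)^2 + (a3*b4-a4*b3)^2 + (a3*b5-a5*b3)^2 + (a4*b5-a5*b4)^2"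
    by (simp add: algebra_simps power2_eq_square power3_eq_cube)
  moreover have "0 \<le> (a1*b2-a2*b1)^2 + (a1*b3-a3*b1)^2 + (a1*b4-a4*b1)^2 + (a1*b5-a5*b1)^2 + (a2*b3-a3*b2)^2
    + (a2*b4-a4*b2)^2 + (a2*b5-a5*b2)^2 + (a3*b4-a4*b3)^2 + (a3*b5-a5*b3)^2 + (a4*b5-a5*b4)^2"
    by (intro add_nonneg_nonneg zero_le_power2)
  ultimately show ?thesis by linarith
qed

lemma pf4: "(u*v - w*z + p*q)^2 \<le> ((u^2+v^2+w^2+z^2+p^2+q^2)/2)^2" for u v w z p q :: real
proof -
  have "\<bar>u*v - w*z + p*q\<bar> \<le> \<bar>u*v\<bar> + \<bar>w*z\<bar> + \<bar>p*q\<bar>" by (simp add: abs_triangle_ineq4 order.trans[OF abs_triangle_ineq])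
  also have "\<dots> \<le> (u^2+v^2+w^2+z^2+p^2+q^2)/2"
  proof -
    have "2*\<bar>s*t\<bar> \<le> s^2+t^2" for s t :: real
    proof -
      have "0 \<le> (\<bar>s\<bar> - \<bar>t\<bar>)^2" by simp
      then have "2*(\<bar>s\<bar>*\<bar>t\<bar>) \<le> \<bar>s\<bar>^2 + \<bar>t\<bar>^2" by (simp add: power2_diff)
      then show ?thesis by (simp add: abs_mult)
    qed
    from add_mono[OF add_mono[OF this[of u v] this[of w z]] this[of p q]] have "2*(\<bar>u*v\<bar> + \<bar>w*z\<bar> + \<bar>p*q\<bar>) \<le> u^2+v^2+w^2+z^2+p^2+q^2" by (simp add: algebra_simps)
    then show ?thesis by (simp add: field_simps)
  qed
  finally have "\<bar>u*v - w*z + p*q\<bar> \<le> (u^2+v^2+w^2+z^2+p^2+q^2)/2" .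
  then show ?thesis by (metis abs_ge_zero power2_abs power_mono)
qed

lemma amgm3: "0 \<le> A \<Longrightarrow> 0 \<le> M \<Longrightarrow> 27 * A * M^2 \<le> 4 * (A + M)^3" for A M :: real
proof -
  assume "0 \<le> A" "0 \<le> M"
  then have "0 \<le> (M - 2*A)^2 * (4*M + A)" by (intro mult_nonneg_nonneg zero_le_power2) simp
  moreover have "4 * (A + M)^3 - 27 * A * M^2 = (M - 2*A)^2 * (4*M + A)" by (simp add: algebra_simps power2_eq_square power3_eq_cube)
  ultimately show ?thesis by linarith
qed

definition Pf :: "real \<Rightarrow> real \<Rightarrow> real \<Rightarrow> real \<Rightarrow> real \<Rightarrow> real \<Rightarrow> real \<Rightarrow> real \<Rightarrow> real \<Rightarrow> real \<Rightarrow> real \<Rightarrow> real \<Rightarrow> real \<Rightarrow> real \<Rightarrow> real \<Rightarrow> real" where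
  "Pf x01 x02 x03 x04 x05 x12 x13 x14 x15 x23 x24 x25 x34 x35 x45 =
     x01*(x23*x45 - x24*x35 + x25*x34) + (-x02)*(x13*x45 - x14*x35 + x15*x34) + x03*(x12*x45 - x14*x25 + x15*x24)
   + (-x04)*(x12*x35 - x13*x25 + x15*x23) + x05*(x12*x34 - x13*x24 + x14*x23)"

lemma pf_bound:
  "36 * (Pf x01 x02 x03 x04 x05 x12 x13 x14 x15 x23 x24 x25 x34 x35 x45)^2
   \<le> 4 * (x01^2+x02^2+x03^2+x04^2+x05^2+x12^2+x13^2+x14^2+x15^2+x23^2+x24^2+x25^2+x34^2+x35^2+x45^2)^3"
proof -
  define P1 where "P1 = x23*x45 - x24*x35 + x25*x34"
  define P2 where "P2 = x13*x45 - x14*x35 + x15*x34"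
  define P3 where "P3 = x12*x45 - x14*x25 + x15*x24"
  define P4 where "P4 = x12*x35 - x13*x25 + x15*x23"
  define P5 where "P5 = x12*x34 - x13*x24 + x14*x23"
  define S1 where "S1 = x23^2+x45^2+x24^2+x35^2+x25^2+x34^2"
  define S2 where "S2 = x13^2+x45^2+x14^2+x35^2+x15^2+x34^2"
  define S3 where "S3 = x12^2+x45^2+x14^2+x25^2+x15^2+x24^2"
  define S4 where "S4 = x12^2+x35^2+x13^2+x25^2+x15^2+x23^2"
  define S5 where "S5 = x12^2+x34^2+x13^2+x24^2+x14^2+x23^2"
  define A where "A = x01^2+x02^2+x03^2+x04^2+x05^2"
  define M where "M = x12^2+x13^2+x14^2+x15^2+x23^2+x24^2+x25^2+x34^2+x35^2+x45^2"
  let ?Pf = "Pf x01 x02 x03 x04 x05 x12 x13 x14 x15 x23 x24 x25 x34 x35 x45"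
  have A0: "0 \<le> A" unfolding A_def by (intro add_nonneg_nonneg zero_le_power2)
  have M0: "0 \<le> M" unfolding M_def by (intro add_nonneg_nonneg zero_le_power2)
  have "?Pf = x01*P1 + (-x02)*P2 + x03*P3 + (-x04)*P4 + x05*P5"
    unfolding Pf_def P1_def P2_def P3_def P4_def P5_def by simp
  then have c1: "?Pf^2 \<le> A * (P1^2+P2^2+P3^2+P4^2+P5^2)"
    using cs5[of x01 P1 "-x02" P2 x03 P3 "-x04" P4 x05 P5] unfolding A_def by simp
  have b1: "P1^2 \<le> (S1/2)^2" unfolding P1_def S1_def by (rule pf4)
  have b2: "P2^2 \<le> (S2/2)^2" unfolding P2_def S2_def by (rule pf4)
  have b3: "P3^2 \<le> (S3/2)^2" unfolding P3_def S3_def by (rule pf4)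
  have b4: "P4^2 \<le> (S4/2)^2" unfolding P4_def S4_def by (rule pf4)
  have b5: "P5^2 \<le> (S5/2)^2" unfolding P5_def S5_def by (rule pf4)
  have sl: "S1 \<le> M" "S2 \<le> M" "S3 \<le> M" "S4 \<le> M" "S5 \<le> M"
    unfolding S1_def S2_def S3_def S4_def S5_def M_def
    by (simp_all add: add_increasing add_increasing2)
  have s0: "0 \<le> S1" "0 \<le> S2" "0 \<le> S3" "0 \<le> S4" "0 \<le> S5"
    unfolding S1_def S2_def S3_def S4_def S5_def by (intro add_nonneg_nonneg zero_le_power2)+
  have ssum: "S1 + S2 + S3 + S4 + S5 = 3 * M" unfolding S1_def S2_def S3_def S4_def S5_def M_def by simp
  have q: "(S/2)^2 \<le> M * S / 4" if "0 \<le> S" "S \<le> M" for S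
  proof -
    have "S * S \<le> M * S" using that by (simp add: mult_right_mono)
    then show ?thesis by (simp add: power2_eq_square)
  qed
  have "P1^2+P2^2+P3^2+P4^2+P5^2 \<le> M * S1 / 4 + M * S2 / 4 + M * S3 / 4 + M * S4 / 4 + M * S5 / 4"
    using b1 b2 b3 b4 b5 q[OF s0(1) sl(1)] q[OF s0(2) sl(2)] q[OF s0(3) sl(3)] q[OF s0(4) sl(4)] q[OF s0(5) sl(5)]
    by linarith
  also have "\<dots> = M * (S1 + S2 + S3 + S4 + S5) / 4" by (simp add: distrib_left add_divide_distrib)
  also have "\<dots> = 3 * M^2 / 4" unfolding ssum by (simp add: power2_eq_square)
  finally have "P1^2+P2^2+P3^2+P4^2+P5^2 \<le> 3 * M^2 / 4" .
  then have "?Pf^2 \<le> A * (3 * M^2 / 4)" using c1 A0 by (meson mult_left_mono order.trans)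
  then have "36 * ?Pf^2 \<le> 27 * A * M^2" by simp
  also have "\<dots> \<le> 4 * (A + M)^3" by (rule amgm3[OF A0 M0])
  also have "A + M = x01^2+x02^2+x03^2+x04^2+x05^2+x12^2+x13^2+x14^2+x15^2+x23^2+x24^2+x25^2+x34^2+x35^2+x45^2"
    unfolding A_def M_def by simp
  finally show ?thesis .
qed

definition dl :: "nat set \<Rightarrow> real form" where "dl I = (\<lambda>S. if S = I then 1 else 0)"

lemma sum_Pow_insert:
  assumes "finite A" "x \<notin> A"
  shows "sum f (Pow (insert x A)) = sum f (Pow A) + sum (\<lambda>B. f (insert x B)) (Pow A)"
proof -
  have "Pow (insert x A) = Pow A \<union> insert x ` Pow A" by (rule Pow_insert)
  moreover have "Pow A \<inter> insert x ` Pow A = {}" using assms by auto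
  moreover have "inj_on (insert x) (Pow A)" using assms unfolding inj_on_def by (auto simp: insert_ident)
  ultimately show ?thesis using assms by (simp add: sum.union_disjoint sum.reindex)
qed

lemma inv_count_sum: "finite A \<Longrightarrow> finite B \<Longrightarrow> inv_count A B = (\<Sum>i\<in>A. card {j\<in>B. j < i})"
proof (induction A rule: finite_induct)
  case empty then show ?case by (simp add: inv_count_def)
next
  case (insert x F)
  have "inv_count (insert x F) B = inv_count {x} B + inv_count F B"
    using inv_union_left[of "{x}" F B] insert by simp
  moreover have "inv_count {x} B = card {j\<in>B. j < x}"
    unfolding inv_count_def
    by (rule bij_betw_same_card[of snd]) (auto simp: bij_betw_def inj_on_def image_def)
  ultimately show ?case using insert by simp
qed

lemma filt_insert: "{j \<in> insert b B. j < (i::nat)} = (if b < i then insert b {j\<in>B. j<i} else {j\<in>B. j<i})" by auto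
lemma filt_empty: "{j \<in> {}. j < (i::nat)} = {}" by auto



lemma wedge_dl_right: "wedge a (dl J) S = (if S \<subseteq> {..<6} \<and> J \<subseteq> S then (-1) ^ inv_count (S - J) J * a (S - J) else (0::real))"
proof (cases "S \<subseteq> {..<6} \<and> J \<subseteq> S")
  case True
  have "wedge a (dl J) S = (\<Sum>A\<in>Pow S. if A = S - J then (-1) ^ inv_count (S - J) J * a (S - J) else 0)"
    unfolding wedge_def dl_def using True by (auto intro!: sum.cong simp: Diff_Diff_Int Int_absorb1)
  also have "\<dots> = (-1) ^ inv_count (S - J) J * a (S - J)"
    using True by (subst sum.delta) (auto simp: finite_subset)
  finally show ?thesis using True by simp
next
  case False
  then show ?thesis unfolding wedge_def dl_def by (auto intro!: sum.neutral)
qed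

lemma wedge_dl_left: "wedge (dl J) a S = (if S \<subseteq> {..<6} \<and> J \<subseteq> S then (-1) ^ inv_count J (S - J) * a (S - J) else (0::real))"
proof (cases "S \<subseteq> {..<6} \<and> J \<subseteq> S")
  case True
  have "wedge (dl J) a S = (\<Sum>A\<in>Pow S. if A = J then (-1) ^ inv_count J (S - J) * a (S - J) else 0)"
    unfolding wedge_def dl_def using True by (auto intro!: sum.cong)
  also have "\<dots> = (-1) ^ inv_count J (S - J) * a (S - J)"
    using True by (subst sum.delta) (auto simp: finite_subset)
  finally show ?thesis using True by simp
next
  case False
  then show ?thesis unfolding wedge_def dl_def by (auto intro!: sum.neutral)
qed

definition cntlt :: "nat \<Rightarrow> nat set \<Rightarrow> nat" where "cntlt i B = card {j\<in>B. j < i}"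
lemma cntlt_empty: "cntlt i {} = 0" by (simp add: cntlt_def)
lemma cntlt_insert: "finite B \<Longrightarrow> cntlt i (insert b B) = (if b \<in> B then cntlt i B else if b < i then Suc (cntlt i B) else cntlt i B)"
  by (simp only: cntlt_def filt_insert) (auto simp: insert_absorb)
lemma inv_count_cnt: "finite A \<Longrightarrow> finite B \<Longrightarrow> inv_count A B = (\<Sum>i\<in>A. cntlt i B)"
  by (simp add: inv_count_sum cntlt_def)

lemma U6: "{..<6::nat} = {0,1,2,3,4,5}" by auto
lemma sum_Pow_empty: "sum f (Pow {}) = f {}" by simp
lemma empty_sub: "({} \<subseteq> B) = True" by simp

lemmas R = sum_Pow_insert sum_Pow_empty insert_iff empty_iff insert_subset empty_sub insert_Diff_if empty_Diff
  card_insert_if card.empty finite_insert finite.emptyI rel_simps if_True if_False simp_thms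
  inv_count_cnt cntlt_empty cntlt_insert sum.empty sum.insert

lemma kill2: "is_k_form 2 a \<Longrightarrow> card S \<noteq> 2 \<Longrightarrow> a S = 0" unfolding is_k_form_def by auto


lemma kill4: "is_k_form 4 a \<Longrightarrow> card S \<noteq> 4 \<Longrightarrow> a S = 0" unfolding is_k_form_def by auto
lemma kill6: "is_k_form 6 a \<Longrightarrow> card S \<noteq> 6 \<Longrightarrow> a S = 0" unfolding is_k_form_def by auto

definition w0 :: "real form" where "w0 = form_add (form_add (dl {0,1}) (dl {2,3})) (dl {4,5})"


lemma top_formula: assumes a: "is_k_form 2 a" and b: "is_k_form 4 b"
  shows "wedge b a {..<6} = b{2,3,4,5}*a{0,1} + b{1,2,4,5}*a{0,3} + b{1,2,3,4}*a{0,5} - b{1,2,3,5}*a{0,4} - b{1,3,4,5}*a{0,2} + b{0,3,4,5}*a{1,2} + b{0,2,3,5}*a{1,4} - b{0,2,3,4}*a{1,5} - b{0,2,4,5}*a{1,3} + b{0,1,4,5}*a{2,3} + b{0,1,3,4}*a{2,5} - b{0,1,3,5}*a{2,4} + b{0,1,2,5}*a{3,4} - b{0,1,2,4}*a{3,5} + b{0,1,2,3}*a{4,5}"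
  apply (simp only: U6 wedge_def)
  apply (simp only: R)
  apply (simp only: kill2[OF a] kill4[OF b] R)
  apply (simp add: algebra_simps)
  done

lemma sq3: "(x+y+z)^2 \<le> 3*(x^2+y^2+z^2)" for x y z :: real
proof -
  have "0 \<le> (x-y)^2 + (y-z)^2 + (x-z)^2" by (intro add_nonneg_nonneg zero_le_power2)
  moreover have "3*(x^2+y^2+z^2) - (x+y+z)^2 = (x-y)^2 + (y-z)^2 + (x-z)^2" by (simp add: algebra_simps power2_eq_square)
  ultimately show ?thesis by linarith
qed

lemma concrete:
  assumes a: "is_k_form 2 (a::real form)"
  shows "(\<Sum>S\<in>Pow {..<6}. (a S)^2) + (\<Sum>S\<in>Pow {..<6}. (form_smult (1/2) (wedge (wedge w0 w0) a) S)^2) = (\<Sum>S\<in>Pow {..<6}. (wedge a w0 S)^2)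
     \<and> (\<Sum>S\<in>Pow {..<6}. (wedge a w0 S)^2) \<le> 4 * (\<Sum>S\<in>Pow {..<6}. (a S)^2)
     \<and> (\<Sum>S\<in>Pow {..<6}. (wedge (wedge a a) a S)^2) \<le> 6 * (\<Sum>S\<in>Pow {..<6}. (a S)^2)^3"
proof -
  have EN: "(\<Sum>S\<in>Pow {..<6}. (a S)^2) = a{0,1}^2 + a{0,2}^2 + a{0,3}^2 + a{0,4}^2 + a{0,5}^2 + a{1,2}^2 + a{1,3}^2 + a{1,4}^2 + a{1,5}^2 + a{2,3}^2 + a{2,4}^2 + a{2,5}^2 + a{3,4}^2 + a{3,5}^2 + a{4,5}^2"
    apply (simp only: U6)
    apply (simp only: R)
    apply (simp only: kill2[OF a] R)
    apply (simp add: ac_simps)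
    done
  have E1: "(\<Sum>S\<in>Pow {..<6}. (wedge a w0 S)^2) = (a{0,1}+a{2,3})^2 + (a{0,1}+a{4,5})^2 + (a{2,3}+a{4,5})^2 + a{0,2}^2 + a{0,3}^2 + a{0,4}^2 + a{0,5}^2 + a{1,2}^2 + a{1,3}^2 + a{1,4}^2 + a{1,5}^2 + a{2,4}^2 + a{2,5}^2 + a{3,4}^2 + a{3,5}^2"
    apply (simp only: w0_def wedge_add_right)
    apply (simp only: U6 form_add_def wedge_dl_right)
    apply (simp only: R)
    apply (simp only: kill2[OF a] R)
    apply (simp add: ac_simps)
    done
  have E2: "(\<Sum>S\<in>Pow {..<6}. (form_smult (1/2) (wedge (wedge w0 w0) a) S)^2) = (a{0,1}+a{2,3}+a{4,5})^2"
    apply (simp only: w0_def wedge_assoc)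
    apply (simp only: wedge_add_left wedge_add_right)
    apply (simp only: U6 form_add_def wedge_dl_left form_smult_def)
    apply (simp only: R)
    apply (simp only: kill2[OF a] R)
    apply (simp add: algebra_simps power2_eq_square)
    done
  have deg6: "is_k_form 6 (wedge (wedge a a) a)"
    using wedge_degree[OF wedge_degree[OF a a] a] by simp
  have E3: "(\<Sum>S\<in>Pow {..<6}. (wedge (wedge a a) a S)^2) = (wedge (wedge a a) a {..<6})^2"
    apply (simp only: U6)
    apply (simp only: R)
    apply (simp only: kill6[OF deg6] R)
    apply simp
    done
  have E4: "wedge (wedge a a) a {..<6} = 6 * Pf (a{0,1}) (a{0,2}) (a{0,3}) (a{0,4}) (a{0,5}) (a{1,2}) (a{1,3}) (a{1,4}) (a{1,5}) (a{2,3}) (a{2,4}) (a{2,5}) (a{3,4}) (a{3,5}) (a{4,5})"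
    apply (subst top_formula[OF a wedge_degree[OF a a, simplified]])
    apply (simp only: wedge_def U6)
    apply (simp only: R)
    apply (simp only: kill2[OF a] R)
    apply (simp add: Pf_def algebra_simps)
    done
  let ?N = "(\<Sum>S\<in>Pow {..<6}. (a S)^2)"
  have N0: "0 \<le> ?N" by (intro sum_nonneg zero_le_power2)
  have P1: "?N + (\<Sum>S\<in>Pow {..<6}. (form_smult (1/2) (wedge (wedge w0 w0) a) S)^2) = (\<Sum>S\<in>Pow {..<6}. (wedge a w0 S)^2)"
    unfolding EN E1 E2 by (simp add: algebra_simps power2_eq_square)
  have "(a{0,1}+a{2,3}+a{4,5})^2 \<le> 3 * ?N"
  proof -
    have "(a{0,1}+a{2,3}+a{4,5})^2 \<le> 3*(a{0,1}^2+a{2,3}^2+a{4,5}^2)" by (rule sq3)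
    also have "a{0,1}^2+a{2,3}^2+a{4,5}^2 \<le> ?N" unfolding EN
      by (simp add: add_increasing add_increasing2)
    finally show ?thesis by linarith
  qed
  then have P2: "(\<Sum>S\<in>Pow {..<6}. (wedge a w0 S)^2) \<le> 4 * ?N" using P1 E2 by linarith
  have "(\<Sum>S\<in>Pow {..<6}. (wedge (wedge a a) a S)^2) = 36 * (Pf (a{0,1}) (a{0,2}) (a{0,3}) (a{0,4}) (a{0,5}) (a{1,2}) (a{1,3}) (a{1,4}) (a{1,5}) (a{2,3}) (a{2,4}) (a{2,5}) (a{3,4}) (a{3,5}) (a{4,5}))^2"
    unfolding E3 E4 by (simp add: power_mult_distrib)
  also have "\<dots> \<le> 4 * ?N^3" unfolding EN by (rule pf_bound)
  also have "\<dots> \<le> 6 * ?N^3" using N0 by simp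
  finally show ?thesis using P1 P2 by blast
qed

lemma dl_delta: "dl = delta" by (rule ext) (simp add: dl_def delta_def)

lemma expand_add_form: "expand e (form_add c d) = form_add (expand e c) (expand e d)"
  by (rule ext) (simp add: form_add_def expand_add[unfolded form_add_def])

lemma expand_add_form': "expand e (form_add c d) = form_add (expand e c) (expand e d)"
  unfolding expand_def form_add_def by (rule ext) (simp add: algebra_simps sum.distrib)

lemma expand_smult_form: "expand e (form_smult r c) = form_smult r (expand e c)"
  unfolding expand_def form_smult_def by (rule ext) (simp add: sum_distrib_left mult.assoc)

lemma delta_span:
  assumes b: "is_dual_basis e" and I: "I \<subseteq> {..<6}"
  shows "inspan e (delta I)"
proof -
  have e1: "\<forall>i<6. is_k_form 1 (e i)" using b unfolding is_dual_basis_def by auto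
  obtain N where N: "\<forall>k<6. \<forall>S. (if S = {k} then 1 else 0) = (\<Sum>j<6. N j k * e j S)"
    using inverse_exists[OF b] by blast
  have dk: "inspan e (delta {k})" if k: "k < 6" for k
  proof -
    have "delta {k} = expand e (\<lambda>I. \<Sum>j<6. N j k * delta {j} I)"
    proof
      fix S
      have "expand e (\<lambda>I. \<Sum>j<6. N j k * delta {j} I) S = (\<Sum>j<6. N j k * expand e (delta {j}) S)"
        by (simp add: expand_sum expand_scale)
      also have "\<dots> = (\<Sum>j<6. N j k * e j S)"
        using expand_delta[of "{_}" e] elem_single[OF e1] by simp
      also have "\<dots> = delta {k} S" using N k by (simp add: delta_def)
      finally show "delta {k} S = expand e (\<lambda>I. \<Sum>j<6. N j k * delta {j} I) S" by simp
    qed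
    then show ?thesis unfolding inspan_def by blast
  qed
  have "finite I" using I finite_subset by blast
  then show ?thesis using I
  proof (induction I rule: finite_linorder_min_induct)
    case empty
    have "delta {} = unit_form" by (simp add: delta_def unit_form_def)
    then have "delta {} = expand e (delta {})" using expand_delta[of "{}" e] by simp
    then show ?case unfolding inspan_def by blast
  next
    case (insert k K)
    obtain c where c: "delta {k} = expand e c" using dk[of k] insert unfolding inspan_def by auto
    obtain d where d: "delta K = expand e d" using insert unfolding inspan_def by auto
    have "delta (insert k K) = wedge (delta {k}) (delta K)"
      using wedge_delta_single insert by metis
    also have "\<dots> = expand e (wedge c d)" using c d expand_hom e1 by simp
    finally show ?case unfolding inspan_def by blast
  qed
qed

lemma span_all:
  assumes b: "is_dual_basis e" and x0: "\<forall>S. \<not> S \<subseteq> {..<6} \<longrightarrow> x S = 0"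
  shows "\<exists>c. (\<forall>S. \<not> S \<subseteq> {..<6} \<longrightarrow> c S = 0) \<and> x = expand e c"
proof -
  have "\<forall>J. \<exists>c. J \<subseteq> {..<6} \<longrightarrow> delta J = expand e c"
    using delta_span[OF b] unfolding inspan_def by blast
  then obtain C where C: "\<And>J. J \<subseteq> {..<6} \<Longrightarrow> delta J = expand e (C J)" by metis
  define c where "c = (\<lambda>I. \<Sum>J\<in>Pow {..<6}. x J * C J I)"
  have "x = expand e c"
  proof
    fix S
    have "expand e c S = (\<Sum>J\<in>Pow {..<6}. x J * expand e (C J) S)"
      unfolding c_def by (simp add: expand_sum expand_scale)
    also have "\<dots> = (\<Sum>J\<in>Pow {..<6}. x J * delta J S)"
      using C by (intro sum.cong) auto
    also have "\<dots> = (\<Sum>J\<in>Pow {..<6}. if J = S then x J else 0)"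
      by (intro sum.cong) (auto simp: delta_def)
    also have "\<dots> = x S" using x0 by (subst sum.delta) auto
    finally show "x S = expand e c S" by simp
  qed
  define c' where "c' = (\<lambda>I. if I \<subseteq> {..<6} then c I else 0)"
  have "expand e c' = expand e c" unfolding expand_def c'_def by (rule ext) (intro sum.cong; auto)
  then show ?thesis using \<open>x = expand e c\<close> by (intro exI[of _ c']) (auto simp: c'_def)
qed

lemma coords_k:
  assumes b: "is_dual_basis e" and x: "is_k_form k x"
  shows "is_k_form k (coords e x) \<and> x = expand e (coords e x)"
proof -
  have e1: "\<forall>i<6. is_k_form 1 (e i)" using b unfolding is_dual_basis_def by auto
  have x0: "\<forall>S. \<not> S \<subseteq> {..<6} \<longrightarrow> x S = 0" using x unfolding is_k_form_def by auto
  obtain c where c0: "\<forall>S. \<not> S \<subseteq> {..<6} \<longrightarrow> c S = 0" and xc: "x = expand e c"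
    using span_all[OF b x0] by blast
  define c2 where "c2 = (\<lambda>I. if card I = k then c I else 0)"
  have deg: "elem_form e I S = 0" if "I \<subseteq> {..<6}" "card I \<noteq> card S \<or> \<not> S \<subseteq> {..<6}" for I S
    using kform_supp[OF elem_deg[OF e1 that(1)]] that by auto
  have "x = expand e c2"
  proof
    fix S
    show "x S = expand e c2 S"
    proof (cases "S \<subseteq> {..<6} \<and> card S = k")
      case True
      have "x S = (\<Sum>I\<in>Pow {..<6}. c I * elem_form e I S)" using xc by (simp add: expand_def)
      also have "\<dots> = (\<Sum>I\<in>Pow {..<6}. c2 I * elem_form e I S)"
        by (intro sum.cong refl) (use deg True in \<open>auto simp: c2_def\<close>)
      finally show ?thesis by (simp add: expand_def)
    next
      case False
      then have "x S = 0" using x unfolding is_k_form_def by auto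
      moreover have "expand e c2 S = 0" unfolding expand_def
        by (intro sum.neutral ballI) (use deg False in \<open>auto simp: c2_def\<close>)
      ultimately show ?thesis by simp
    qed
  qed
  moreover have c20: "\<forall>S. \<not> S \<subseteq> {..<6} \<longrightarrow> c2 S = 0" using c0 by (simp add: c2_def)
  ultimately have "coords e x = c2" using coords_eq[OF b] by blast
  moreover have "is_k_form k c2" unfolding is_k_form_def using c20 by (auto simp: c2_def)
  ultimately show ?thesis using \<open>x = expand e c2\<close> by simp
qed

lemma norm_sq: "(form_norm e x)^2 = (\<Sum>I\<in>Pow {..<6}. (coords e x I)^2)"
  unfolding form_norm_def by (simp add: sum_nonneg)

theorem lemma4p1:
  fixes \<omega> \<rho> \<alpha> :: "real form" and e :: "nat \<Rightarrow> real form"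
  assumes "su3_adapted e \<omega> \<rho>"
    and "is_k_form 2 \<alpha>"
  shows "(form_norm e \<alpha>)^2 + (form_norm e (form_smult (1/2) (wedge (wedge \<omega> \<omega>) \<alpha>)))^2
           = (form_norm e (wedge \<alpha> \<omega>))^2
       \<and> (form_norm e (wedge \<alpha> \<omega>))^2 \<le> 4 * (form_norm e \<alpha>)^2
       \<and> (form_norm e (wedge (wedge \<alpha> \<alpha>) \<alpha>))^2 \<le> 6 * (form_norm e \<alpha>)^6"
proof -
  have b: "is_dual_basis e" and om: "\<omega> = form_add (form_add (wedge (e 0) (e 1)) (wedge (e 2) (e 3))) (wedge (e 4) (e 5))"
    using assms(1) unfolding su3_adapted_def by auto
  have e1: "\<forall>i<6. is_k_form 1 (e i)" using b unfolding is_dual_basis_def by auto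
  define a where "a = coords e \<alpha>"
  have a2: "is_k_form 2 a" and aa: "\<alpha> = expand e a" using coords_k[OF b assms(2)] unfolding a_def by auto
  have el: "elem_form e {i, j} = wedge (e i) (e j)" if "i < j" "j < 6" for i j
    using elem_insert[of "{j}" i e] elem_single[OF e1, of j] that by simp
  have ow: "\<omega> = expand e w0"
    unfolding om w0_def expand_add_form' dl_delta
    by (simp add: expand_delta el)
  have sup: "\<forall>S. \<not> S \<subseteq> {..<6} \<longrightarrow> wedge x y S = 0" for x y :: "real form" by (simp add: wedge_def)
  have supm: "\<forall>S. \<not> S \<subseteq> {..<6} \<longrightarrow> form_smult r (wedge x y) S = 0" for r and x y :: "real form"
    by (simp add: wedge_def form_smult_def)
  have c1: "coords e (wedge \<alpha> \<omega>) = wedge a w0"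
    by (rule coords_eq[OF b sup]) (simp add: aa ow expand_hom[OF e1])
  have c2: "coords e (form_smult (1/2) (wedge (wedge \<omega> \<omega>) \<alpha>)) = form_smult (1/2) (wedge (wedge w0 w0) a)"
    by (rule coords_eq[OF b supm]) (simp add: aa ow expand_hom[OF e1] expand_smult_form)
  have c3: "coords e (wedge (wedge \<alpha> \<alpha>) \<alpha>) = wedge (wedge a a) a"
    by (rule coords_eq[OF b sup]) (simp add: aa expand_hom[OF e1])
  have n6: "(form_norm e \<alpha>)^6 = ((form_norm e \<alpha>)^2)^3" by (simp add: power_mult[symmetric])
  show ?thesis
    unfolding n6 norm_sq c1 c2 c3 a_def[symmetric] using concrete[OF a2] by simp
qed

end
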